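(* Let $(X,\mathcal{A})$ be a measurable space, $f,g\in\mathcal{F}_{[0,1]}^{(X,\mathcal{A})}$ comonotone, $\star:[0,1]^2\to[0,1]$ continuous and non-decreasing in both arguments, $S$ a t-semiconorm, and $\alpha,\beta,\gamma,\lambda,\upsilon,\tau\in(0,\infty)$ with $\gamma\tau\le1$ and $\beta\upsilon\le1$. If for all $a,b,c\in[0,1]$ \[ \big(S((a\star b)^{\alpha},c)\big)^{\lambda}\ \le\ \big[\big(S(a^{\beta},c)\big)^{\upsilon}\star b\big]\wedge\big[a\star\big(S(b^{\gamma},c)\big)^{\tau}\big], \] then for every monotone measure $m$ on $(X,\mathcal{A})$ with $m(X)=1$, \[ \big[\mathbf{I}_S(m,(f\star g)^{\alpha})\big]^{\lambda}\ \le\ \big[\mathbf{I}_S(m,f^{\beta})\big]^{\upsilon}\star\big[\mathbf{I}_S(m,g^{\gamma})\big]^{\tau}. \]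
   Context: A monotone measure on $(X,\mathcal{A})$ is $m:\mathcal{A}\to[0,\infty]$ with $m(\emptyset)=0$, $m(X)>0$, $m(A)\le m(B)$ for $A\subseteq B$. $\mathcal{F}_{[0,1]}^{(X,\mathcal{A})}$ is the set of $\mathcal{A}$-measurable $f:X\to[0,1]$. A t-semiconorm is a map $S:[0,1]^2\to[0,1]$, non-decreasing in both components, with neutral element $0$ (hence $S(a,b)\ge\max(a,b)$). The semiconormed integral is $\mathbf{I}_S(m,f)=\inf\{S(t,m(\{f>t\})) : t\in(0,1]\}$. $f,g$ are comonotone if $(f(x)-f(y))(g(x)-g(y))\ge0$ for all $x,y$. Operations on functions are pointwise. *)

theory Defs
  imports "HOL-Analysis.Analysis"
begin

definition monotone_measure :: "'a measure \<Rightarrow> ('a set \<Rightarrow> ennreal) \<Rightarrow> bool" where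
  "monotone_measure M m \<longleftrightarrow>
     m {} = 0 \<and> m (space M) > 0 \<and>
     (\<forall>A\<in>sets M. \<forall>B\<in>sets M. A \<subseteq> B \<longrightarrow> m A \<le> m B)"

definition F01 :: "'a measure \<Rightarrow> ('a \<Rightarrow> real) set" where
  "F01 M = {f. f \<in> borel_measurable M \<and> (\<forall>x\<in>space M. 0 \<le> f x \<and> f x \<le> 1)}"

definition t_semiconorm :: "(real \<Rightarrow> real \<Rightarrow> real) \<Rightarrow> bool" where
  "t_semiconorm S \<longleftrightarrow>
     (\<forall>a\<in>{0..1}. \<forall>b\<in>{0..1}. S a b \<in> {0..1}) \<and>
     (\<forall>a\<in>{0..1}. \<forall>a'\<in>{0..1}. \<forall>b\<in>{0..1}. \<forall>b'\<in>{0..1}.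
        a \<le> a' \<longrightarrow> b \<le> b' \<longrightarrow> S a b \<le> S a' b') \<and>
     (\<forall>a\<in>{0..1}. S a 0 = a \<and> S 0 a = a)"

definition comonotone :: "'a measure \<Rightarrow> ('a \<Rightarrow> real) \<Rightarrow> ('a \<Rightarrow> real) \<Rightarrow> bool" where
  "comonotone M f g \<longleftrightarrow>
     (\<forall>x\<in>space M. \<forall>y\<in>space M. (f x - f y) * (g x - g y) \<ge> 0)"

text \<open>Semiconormed integral. The measure value m{f>t} is passed to S as a real
  number; this is exact whenever m is finite (in particular when m(X)=1).\<close>
definition semiconormed_integral ::
  "'a measure \<Rightarrow> (real \<Rightarrow> real \<Rightarrow> real) \<Rightarrow> ('a set \<Rightarrow> ennreal) \<Rightarrow> ('a \<Rightarrow> real) \<Rightarrow> real" where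
  "semiconormed_integral M S m f =
     (INF t\<in>{0<..1}. S t (enn2real (m {x\<in>space M. f x > t})))"

end

theory Submission
  imports Defs
begin

lemma inf_cont:
  fixes F :: "real \<times> real \<Rightarrow> real" and u1 :: "'a \<Rightarrow> real" and u2 :: "'b \<Rightarrow> real"
  assumes cont: "continuous_on ({0..1}\<times>{0..1}) F" and ne: "A \<noteq> {}" "B \<noteq> {}"
    and r1: "\<And>a. a \<in> A \<Longrightarrow> u1 a \<in> {0..1}" and r2: "\<And>b. b \<in> B \<Longrightarrow> u2 b \<in> {0..1}"
    and le: "\<And>a b. a \<in> A \<Longrightarrow> b \<in> B \<Longrightarrow> L \<le> F (u1 a, u2 b)"
  shows "L \<le> F (INF a\<in>A. u1 a, INF b\<in>B. u2 b)"
proof (rule ccontr)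
  let ?p = "INF a\<in>A. u1 a" and ?q = "INF b\<in>B. u2 b"
  assume "\<not> ?thesis"
  hence e: "L - F (?p, ?q) > 0" by simp
  have bA: "bdd_below (u1 ` A)" using r1 by (auto intro!: bdd_belowI[of _ 0])
  have bB: "bdd_below (u2 ` B)" using r2 by (auto intro!: bdd_belowI[of _ 0])
  have p01: "?p \<in> {0..1}"
  proof -
    obtain a where a: "a \<in> A" using ne by auto
    have "?p \<le> u1 a" by (rule cINF_lower[OF bA a])
    moreover have "0 \<le> ?p" using ne r1 by (auto intro!: cINF_greatest)
    ultimately show ?thesis using r1[OF a] by auto
  qed
  have q01: "?q \<in> {0..1}"
  proof -
    obtain b where b: "b \<in> B" using ne by auto
    have "?q \<le> u2 b" by (rule cINF_lower[OF bB b])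
    moreover have "0 \<le> ?q" using ne r2 by (auto intro!: cINF_greatest)
    ultimately show ?thesis using r2[OF b] by auto
  qed
  from cont[unfolded continuous_on_iff] p01 q01 e obtain d where d: "d > 0"
    and dd: "\<And>z. z \<in> {0..1}\<times>{0..1} \<Longrightarrow> dist z (?p, ?q) < d \<Longrightarrow> dist (F z) (F (?p, ?q)) < L - F (?p, ?q)"
    by (metis SigmaI)
  have "?p < ?p + d/2" using d by simp
  then obtain a where a: "a \<in> A" "u1 a < ?p + d/2" using cINF_less_iff[OF ne(1) bA] by blast
  have "?q < ?q + d/2" using d by simp
  then obtain b where b: "b \<in> B" "u2 b < ?q + d/2" using cINF_less_iff[OF ne(2) bB] by blast
  have pa: "?p \<le> u1 a" by (rule cINF_lower[OF bA a(1)])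
  have qb: "?q \<le> u2 b" by (rule cINF_lower[OF bB b(1)])
  have "dist (u1 a, u2 b) (?p, ?q) \<le> dist (u1 a) ?p + dist (u2 b) ?q"
    by (simp add: dist_Pair_Pair sqrt_sum_squares_le_sum_abs dist_real_def)
  also have "\<dots> < d" using a b pa qb by (simp add: dist_real_def)
  finally have "dist (F (u1 a, u2 b)) (F (?p, ?q)) < L - F (?p, ?q)"
    using dd r1[OF a(1)] r2[OF b(1)] by auto
  hence "F (u1 a, u2 b) < L" by (simp add: dist_real_def)
  with le[OF a(1) b(1)] show False by simp
qed

lemma mu_props:
  assumes mm: "monotone_measure M m" and m1: "m (space M) = 1" and E: "E \<in> sets M"
  shows "0 \<le> enn2real (m E)" "enn2real (m E) \<le> 1"
proof -
  have "m E \<le> m (space M)" using mm E unfolding monotone_measure_def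
    by (meson sets.sets_into_space sets.top)
  hence "m E \<le> 1" using m1 by simp
  thus "enn2real (m E) \<le> 1" using enn2real_mono[of "m E" 1] by simp
qed simp

lemma mu_mono:
  assumes mm: "monotone_measure M m" and m1: "m (space M) = 1" and E: "E \<in> sets M" and F: "F \<in> sets M"
    and sub: "E \<subseteq> F"
  shows "enn2real (m E) \<le> enn2real (m F)"
proof -
  have "m E \<le> m F" using mm E F sub unfolding monotone_measure_def by blast
  moreover have "m F \<le> m (space M)" using mm F unfolding monotone_measure_def
    by (meson sets.sets_into_space sets.top)
  ultimately have "m E \<le> m F" "m F < top" using m1 ennreal_one_less_top
    by (auto intro: order.strict_trans1)
  thus ?thesis by (intro enn2real_mono) auto
qed

lemma S_props:
  assumes S: "t_semiconorm S" and a: "a \<in> {0..1}" and c: "c \<in> {0..1}"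
  shows "S a c \<in> {0..1}" "a \<le> S a c" "c \<le> S a c"
    "\<And>a' c'. a' \<in> {0..1} \<Longrightarrow> c' \<in> {0..1} \<Longrightarrow> a \<le> a' \<Longrightarrow> c \<le> c' \<Longrightarrow> S a c \<le> S a' c'"
proof -
  show "S a c \<in> {0..1}" using S a c unfolding t_semiconorm_def by blast
  have mo: "\<And>a a' b b'. a\<in>{0..1} \<Longrightarrow> a'\<in>{0..1} \<Longrightarrow> b\<in>{0..1} \<Longrightarrow> b'\<in>{0..1} \<Longrightarrow> a\<le>a' \<Longrightarrow> b\<le>b' \<Longrightarrow> S a b \<le> S a' b'"
    using S unfolding t_semiconorm_def by blast
  have "S a 0 \<le> S a c" by (rule mo) (use a c in auto)
  moreover have "S a 0 = a" using S a unfolding t_semiconorm_def by auto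
  ultimately show "a \<le> S a c" by simp
  have "S 0 c \<le> S a c" by (rule mo) (use a c in auto)
  moreover have "S 0 c = c" using S c unfolding t_semiconorm_def by auto
  ultimately show "c \<le> S a c" by simp
  show "\<And>a' c'. a' \<in> {0..1} \<Longrightarrow> c' \<in> {0..1} \<Longrightarrow> a \<le> a' \<Longrightarrow> c \<le> c' \<Longrightarrow> S a c \<le> S a' c'"
    using S a c unfolding t_semiconorm_def by blast
qed

lemma set_meas: "h \<in> borel_measurable M \<Longrightarrow> {x\<in>space M. h x > (t::real)} \<in> sets M"
  by measurable

lemma integral_props:
  assumes mm: "monotone_measure M m" and m1: "m (space M) = 1" and S: "t_semiconorm S"
    and hm: "h \<in> borel_measurable M"
  shows "\<And>t. t \<in> {0<..1} \<Longrightarrow> S t (enn2real (m {x\<in>space M. h x > t})) \<in> {0..1}"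
    "\<And>t. t \<in> {0<..1} \<Longrightarrow> t \<le> S t (enn2real (m {x\<in>space M. h x > t}))"
    "\<And>t. t \<in> {0<..1} \<Longrightarrow> semiconormed_integral M S m h \<le> S t (enn2real (m {x\<in>space M. h x > t}))"
    "0 \<le> semiconormed_integral M S m h"
proof -
  fix t :: real assume t: "t \<in> {0<..1}"
  have E: "{x\<in>space M. h x > t} \<in> sets M" using hm by measurable
  have "enn2real (m {x\<in>space M. h x > t}) \<in> {0..1}" using mu_props[OF mm m1 E] by auto
  moreover have t': "t \<in> {0..1}" using t by auto
  ultimately show "S t (enn2real (m {x\<in>space M. h x > t})) \<in> {0..1}"
    "t \<le> S t (enn2real (m {x\<in>space M. h x > t}))" using S_props[OF S] by blast+
next
  have E: "{x\<in>space M. h x > t} \<in> sets M" for t using hm by measurable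
  have lo: "0 \<le> S t (enn2real (m {x\<in>space M. h x > t}))" if "t \<in> {0<..1}" for t
    using S_props(1)[OF S, of t "enn2real (m {x\<in>space M. h x > t})"] mu_props[OF mm m1 E[of t]] that
    by auto
  have bdd: "bdd_below ((\<lambda>t. S t (enn2real (m {x\<in>space M. h x > t}))) ` {0<..1})"
    using lo by (intro bdd_belowI[of _ 0]) auto
  show "\<And>t. t \<in> {0<..1} \<Longrightarrow> semiconormed_integral M S m h \<le> S t (enn2real (m {x\<in>space M. h x > t}))"
    unfolding semiconormed_integral_def by (rule cINF_lower[OF bdd])
  show "0 \<le> semiconormed_integral M S m h"
    unfolding semiconormed_integral_def using lo by (intro cINF_greatest) auto
qed

lemma nested:
  assumes comon: "comonotone M f g"
  shows "{x\<in>space M. f x > a} \<subseteq> {x\<in>space M. g x > b} \<or> {x\<in>space M. g x > b} \<subseteq> {x\<in>space M. f x > a}"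
proof (rule ccontr)
  assume "\<not> ?thesis"
  then obtain x y where x: "x \<in> space M" "f x > a" "\<not> g x > b" and y: "y \<in> space M" "g y > b" "\<not> f y > a"
    by auto
  have "(f x - f y) * (g x - g y) \<ge> 0" using comon x y unfolding comonotone_def by blast
  moreover have "(f x - f y) * (g x - g y) < 0" using x y by (intro mult_pos_neg) auto
  ultimately show False by simp
qed

lemma pw01: "(x::real) \<in> {0..1} \<Longrightarrow> e > 0 \<Longrightarrow> x powr e \<in> {0..1}"
  using powr_mono2[of e x 1] by auto

lemma powr_less_iff2: "(x::real) \<ge> 0 \<Longrightarrow> y \<ge> 0 \<Longrightarrow> e > 0 \<Longrightarrow> x powr e < y powr e \<longleftrightarrow> x < y"
  by (meson less_le_not_le powr_less_mono2 powr_mono2 linorder_not_less)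

lemma powr_inv_powr: "(t::real) > 0 \<Longrightarrow> e > 0 \<Longrightarrow> (t powr (1/e)) powr e = t"
  by (simp add: powr_powr)

lemma powr_smaller: "(u::real) \<in> {0..1} \<Longrightarrow> e > 0 \<Longrightarrow> d \<le> 1/e \<Longrightarrow> u powr (1/e) \<le> u powr d"
  by (rule powr_mono') auto

theorem corollary4p3:
  fixes M :: "'a measure"
    and f g :: "'a \<Rightarrow> real"
    and star :: "real \<Rightarrow> real \<Rightarrow> real"
    and S :: "real \<Rightarrow> real \<Rightarrow> real"
    and \<alpha> \<beta> \<gamma> lam \<upsilon> \<tau> :: real
  assumes f: "f \<in> F01 M" and g: "g \<in> F01 M"
    and comon: "comonotone M f g"
    and star_range: "\<forall>a\<in>{0..1}. \<forall>b\<in>{0..1}. star a b \<in> {0..1}"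
    and star_cont: "continuous_on ({0..1} \<times> {0..1}) (\<lambda>(a, b). star a b)"
    and star_mono: "\<forall>a\<in>{0..1}. \<forall>a'\<in>{0..1}. \<forall>b\<in>{0..1}. \<forall>b'\<in>{0..1}.
                      a \<le> a' \<longrightarrow> b \<le> b' \<longrightarrow> star a b \<le> star a' b'"
    and S: "t_semiconorm S"
    and pos: "\<alpha> > 0" "\<beta> > 0" "\<gamma> > 0" "lam > 0" "\<upsilon> > 0" "\<tau> > 0"
    and gt: "\<gamma> * \<tau> \<le> 1" and bu: "\<beta> * \<upsilon> \<le> 1"
    and ineq: "\<forall>a\<in>{0..1}. \<forall>b\<in>{0..1}. \<forall>c\<in>{0..1}.
       (S ((star a b) powr \<alpha>) c) powr lam
         \<le> min (star ((S (a powr \<beta>) c) powr \<upsilon>) b) (star a ((S (b powr \<gamma>) c) powr \<tau>))"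
  shows "\<forall>m. monotone_measure M m \<and> m (space M) = 1 \<longrightarrow>
     (semiconormed_integral M S m (\<lambda>x. (star (f x) (g x)) powr \<alpha>)) powr lam
       \<le> star ((semiconormed_integral M S m (\<lambda>x. f x powr \<beta>)) powr \<upsilon>)
              ((semiconormed_integral M S m (\<lambda>x. g x powr \<gamma>)) powr \<tau>)"
proof (intro allI impI)
  fix m assume "monotone_measure M m \<and> m (space M) = 1"
  hence mm: "monotone_measure M m" and m1: "m (space M) = 1" by auto
  have ineq1: "\<And>a b c. a\<in>{0..1} \<Longrightarrow> b\<in>{0..1} \<Longrightarrow> c\<in>{0..1} \<Longrightarrow>
       (S ((star a b) powr \<alpha>) c) powr lam \<le> star ((S (a powr \<beta>) c) powr \<upsilon>) b"
    using ineq by fastforce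
  have ineq2: "\<And>a b c. a\<in>{0..1} \<Longrightarrow> b\<in>{0..1} \<Longrightarrow> c\<in>{0..1} \<Longrightarrow>
       (S ((star a b) powr \<alpha>) c) powr lam \<le> star a ((S (b powr \<gamma>) c) powr \<tau>)"
    using ineq by fastforce
  have fm: "f \<in> borel_measurable M" and fr: "\<And>x. x \<in> space M \<Longrightarrow> 0 \<le> f x \<and> f x \<le> 1"
    using f unfolding F01_def by auto
  have gm: "g \<in> borel_measurable M" and gr: "\<And>x. x \<in> space M \<Longrightarrow> 0 \<le> g x \<and> g x \<le> 1"
    using g unfolding F01_def by auto
  define cl :: "real \<Rightarrow> real" where "cl x = max 0 (min 1 x)" for x
  have clc: "continuous_on UNIV (\<lambda>z::real\<times>real. (cl (fst z), cl (snd z)))"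
    unfolding cl_def by (intro continuous_intros)
  have c1: "continuous_on UNIV (\<lambda>z::real\<times>real. (\<lambda>(a, b). star a b) (cl (fst z), cl (snd z)))"
    by (rule continuous_on_compose2[OF star_cont clc]) (auto simp: cl_def)
  have pm: "(\<lambda>x. (f x, g x)) \<in> borel_measurable M" using fm gm by measurable
  have "(\<lambda>x. (\<lambda>z::real\<times>real. (\<lambda>(a, b). star a b) (cl (fst z), cl (snd z))) (f x, g x)) \<in> borel_measurable M"
    by (rule borel_measurable_continuous_on[OF c1 pm])
  hence "(\<lambda>x. star (cl (f x)) (cl (g x))) \<in> borel_measurable M" by simp
  moreover have "\<And>x. x \<in> space M \<Longrightarrow> star (f x) (g x) = star (cl (f x)) (cl (g x))"
    using fr gr unfolding cl_def by (metis max.absorb2 min.absorb2)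
  ultimately have sm: "(\<lambda>x. star (f x) (g x)) \<in> borel_measurable M"
    using measurable_cong[of M "\<lambda>x. star (f x) (g x)" "\<lambda>x. star (cl (f x)) (cl (g x))"] by simp
  define h where "h x = star (f x) (g x) powr \<alpha>" for x
  have hm: "h \<in> borel_measurable M" unfolding h_def using sm by measurable
  have sr: "\<And>x. x \<in> space M \<Longrightarrow> star (f x) (g x) \<in> {0..1}" using fr gr star_range by auto
  have hr: "\<And>x. x \<in> space M \<Longrightarrow> 0 \<le> h x \<and> h x \<le> 1" unfolding h_def
    using pw01[OF sr pos(1)] by auto
  define f' where "f' x = f x powr \<beta>" for x
  define g' where "g' x = g x powr \<gamma>" for x
  have f'm: "f' \<in> borel_measurable M" unfolding f'_def using fm by measurable
  have g'm: "g' \<in> borel_measurable M" unfolding g'_def using gm by measurable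
  have f'r: "\<And>x. x \<in> space M \<Longrightarrow> 0 \<le> f' x \<and> f' x \<le> 1" unfolding f'_def
    using pw01[OF _ pos(2)] fr by fastforce
  have g'r: "\<And>x. x \<in> space M \<Longrightarrow> 0 \<le> g' x \<and> g' x \<le> 1" unfolding g'_def
    using pw01[OF _ pos(3)] gr by fastforce
  define \<mu> where "\<mu> E = enn2real (m E)" for E
  define u1 where "u1 t = S t (\<mu> {x\<in>space M. f' x > t})" for t
  define u2 where "u2 t = S t (\<mu> {x\<in>space M. g' x > t})" for t
  note Ih = integral_props[OF mm m1 S hm]
  note If = integral_props[OF mm m1 S f'm]
  note Ig = integral_props[OF mm m1 S g'm]
  let ?I = "semiconormed_integral M S m h"
  have key: "?I powr lam \<le> star (u1 t1 powr \<upsilon>) (u2 t2 powr \<tau>)"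
    if t1: "t1 \<in> {0<..1}" and t2: "t2 \<in> {0<..1}" for t1 t2
  proof -
    define a where "a = t1 powr (1/\<beta>)"
    define b where "b = t2 powr (1/\<gamma>)"
    have a01: "a \<in> {0..1}" unfolding a_def using pw01[of t1 "1/\<beta>"] t1 pos by auto
    have b01: "b \<in> {0..1}" unfolding b_def using pw01[of t2 "1/\<gamma>"] t2 pos by auto
    have apos: "a > 0" unfolding a_def using t1 by auto
    have bpos: "b > 0" unfolding b_def using t2 by auto
    have ab: "a powr \<beta> = t1" unfolding a_def using powr_inv_powr t1 pos by auto
    have bb: "b powr \<gamma> = t2" unfolding b_def using powr_inv_powr t2 pos by auto
    define A where "A = {x\<in>space M. f x > a}"
    define B where "B = {x\<in>space M. g x > b}"
    have A': "{x\<in>space M. f' x > t1} = A" unfolding A_def f'_def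
      using powr_less_iff2[of a _ \<beta>] fr a01 pos ab by auto
    have B': "{x\<in>space M. g' x > t2} = B" unfolding B_def g'_def
      using powr_less_iff2[of b _ \<gamma>] gr b01 pos bb by auto
    have Am: "A \<in> sets M" using set_meas[OF f'm, of t1] A' by simp
    have Bm: "B \<in> sets M" using set_meas[OF g'm, of t2] B' by simp
    have u1e: "u1 t1 = S t1 (\<mu> A)" unfolding u1_def A' ..
    have u2e: "u2 t2 = S t2 (\<mu> B)" unfolding u2_def B' ..
    have u101: "u1 t1 \<in> {0..1}" using If(1)[OF t1] unfolding u1_def \<mu>_def .
    have u201: "u2 t2 \<in> {0..1}" using Ig(1)[OF t2] unfolding u2_def \<mu>_def .
    have t1u: "t1 \<le> u1 t1" using If(2)[OF t1] unfolding u1_def \<mu>_def .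
    have t2u: "t2 \<le> u2 t2" using Ig(2)[OF t2] unfolding u2_def \<mu>_def .
    have muA: "\<mu> A \<in> {0..1}" using mu_props[OF mm m1 Am] unfolding \<mu>_def by auto
    have muB: "\<mu> B \<in> {0..1}" using mu_props[OF mm m1 Bm] unfolding \<mu>_def by auto
    have aU: "a \<le> u1 t1 powr \<upsilon>"
    proof -
      have "a \<le> u1 t1 powr (1/\<beta>)" unfolding a_def using powr_mono2[of "1/\<beta>" t1 "u1 t1"] pos t1 t1u by auto
      also have "\<dots> \<le> u1 t1 powr \<upsilon>" using powr_smaller[OF u101 pos(2)] bu pos by (simp add: field_simps)
      finally show ?thesis .
    qed
    have bU: "b \<le> u2 t2 powr \<tau>"
    proof -
      have "b \<le> u2 t2 powr (1/\<gamma>)" unfolding b_def using powr_mono2[of "1/\<gamma>" t2 "u2 t2"] pos t2 t2u by auto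
      also have "\<dots> \<le> u2 t2 powr \<tau>" using powr_smaller[OF u201 pos(3)] gt pos by (simp add: field_simps)
      finally show ?thesis .
    qed
    have starpos: "star a b > 0"
    proof -
      define c where "c = b powr (1/\<tau>)"
      have c01: "c \<in> {0..1}" unfolding c_def using pw01[OF b01, of "1/\<tau>"] pos by auto
      have cpos: "c > 0" unfolding c_def using bpos by auto
      have cb: "c powr \<tau> = b" unfolding c_def using powr_inv_powr bpos pos by auto
      have s00: "star 0 0 powr \<alpha> \<in> {0..1}" using pw01[of "star 0 0" \<alpha>] star_range pos by auto
      have "(S ((star 0 0) powr \<alpha>) c) powr lam \<le> star 0 ((S (0 powr \<gamma>) c) powr \<tau>)"
        by (rule ineq2) (use c01 in auto)
      moreover have "S (0 powr \<gamma>) c = c" using S c01 unfolding t_semiconorm_def by auto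
      moreover have "c \<le> S ((star 0 0) powr \<alpha>) c" using S_props(3)[OF S s00 c01] .
      ultimately have "c powr lam \<le> star 0 b" using cb powr_mono2[of lam c "S ((star 0 0) powr \<alpha>) c"] pos
        cpos by auto
      moreover have "c powr lam > 0" using cpos by auto
      moreover have "star 0 b \<le> star a b" using star_mono a01 b01 apos by auto
      ultimately show ?thesis by linarith
    qed
    define s where "s = star a b powr \<alpha>"
    have sab: "star a b \<in> {0..1}" using star_range a01 b01 by auto
    have s01: "s \<in> {0<..1}" unfolding s_def using pw01[OF sab pos(1)] starpos by auto
    define H where "H = {x\<in>space M. h x > s}"
    have Hm: "H \<in> sets M" unfolding H_def using set_meas[OF hm] .
    have HAB: "H \<subseteq> A \<union> B"
    proof
      fix x assume x: "x \<in> H"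
      hence xs: "x \<in> space M" unfolding H_def by auto
      have "star a b < star (f x) (g x)"
        using x sr[OF xs] sab powr_less_iff2[of "star a b" "star (f x) (g x)" \<alpha>] pos
        unfolding H_def h_def s_def by auto
      hence "\<not> (f x \<le> a \<and> g x \<le> b)" using star_mono fr[OF xs] gr[OF xs] a01 b01
        by (meson atLeastAtMost_iff linorder_not_le)
      thus "x \<in> A \<union> B" using xs unfolding A_def B_def by auto
    qed
    have muH: "\<mu> H \<in> {0..1}" using mu_props[OF mm m1 Hm] unfolding \<mu>_def by auto
    have Is: "?I \<le> S s (\<mu> H)" using Ih(3)[OF s01] unfolding H_def \<mu>_def .
    have I0: "0 \<le> ?I" by (rule Ih(4))
    have s01': "s \<in> {0..1}" using s01 by auto
    from nested[OF comon, of a b] have "A \<subseteq> B \<or> B \<subseteq> A" unfolding A_def B_def .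
    thus ?thesis
    proof
      assume AB: "A \<subseteq> B"
      have "\<mu> H \<le> \<mu> B" unfolding \<mu>_def using mu_mono[OF mm m1 Hm Bm] HAB AB by auto
      hence "S s (\<mu> H) \<le> S s (\<mu> B)" using S_props(4)[OF S s01' muH s01' muB] by auto
      hence "?I powr lam \<le> (S s (\<mu> B)) powr lam" using Is I0 powr_mono2 pos by (meson order.trans less_imp_le)
      also have "\<dots> \<le> star a ((S (b powr \<gamma>) (\<mu> B)) powr \<tau>)"
        unfolding s_def by (rule ineq2[OF a01 b01 muB])
      also have "\<dots> = star a (u2 t2 powr \<tau>)" using bb u2e by simp
      also have "\<dots> \<le> star (u1 t1 powr \<upsilon>) (u2 t2 powr \<tau>)"
        using star_mono a01 aU pw01[OF u101 pos(5)] pw01[OF u201 pos(6)] by auto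
      finally show ?thesis .
    next
      assume BA: "B \<subseteq> A"
      have "\<mu> H \<le> \<mu> A" unfolding \<mu>_def using mu_mono[OF mm m1 Hm Am] HAB BA by auto
      hence "S s (\<mu> H) \<le> S s (\<mu> A)" using S_props(4)[OF S s01' muH s01' muA] by auto
      hence "?I powr lam \<le> (S s (\<mu> A)) powr lam" using Is I0 powr_mono2 pos by (meson order.trans less_imp_le)
      also have "\<dots> \<le> star ((S (a powr \<beta>) (\<mu> A)) powr \<upsilon>) b"
        unfolding s_def by (rule ineq1[OF a01 b01 muA])
      also have "\<dots> = star (u1 t1 powr \<upsilon>) b" using ab u1e by simp
      also have "\<dots> \<le> star (u1 t1 powr \<upsilon>) (u2 t2 powr \<tau>)"
        using star_mono b01 bU pw01[OF u101 pos(5)] pw01[OF u201 pos(6)] by auto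
      finally show ?thesis .
    qed
  qed
  have Fc: "continuous_on ({0..1}\<times>{0..1}) (\<lambda>z::real\<times>real. (\<lambda>(a, b). star a b) (fst z powr \<upsilon>, snd z powr \<tau>))"
  proof (rule continuous_on_compose2[OF star_cont])
    show "continuous_on ({0..1}\<times>{0..1}) (\<lambda>z::real\<times>real. (fst z powr \<upsilon>, snd z powr \<tau>))"
      using pos by (intro continuous_intros continuous_on_powr') auto
    show "(\<lambda>z::real\<times>real. (fst z powr \<upsilon>, snd z powr \<tau>)) ` ({0..1}\<times>{0..1}) \<subseteq> {0..1}\<times>{0..1}"
      using pw01 pos by auto
  qed
  have u1r: "\<And>t. t \<in> {0<..1} \<Longrightarrow> u1 t \<in> {0..1}" using If(1) unfolding u1_def \<mu>_def .
  have u2r: "\<And>t. t \<in> {0<..1} \<Longrightarrow> u2 t \<in> {0..1}" using Ig(1) unfolding u2_def \<mu>_def .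
  have "?I powr lam \<le> (\<lambda>z::real\<times>real. (\<lambda>(a, b). star a b) (fst z powr \<upsilon>, snd z powr \<tau>))
          (INF t\<in>{0<..1}. u1 t, INF t\<in>{0<..1}. u2 t)"
    by (rule inf_cont[OF Fc _ _ u1r u2r]) (use key in auto)
  moreover have "semiconormed_integral M S m (\<lambda>x. f x powr \<beta>) = (INF t\<in>{0<..1}. u1 t)"
    unfolding semiconormed_integral_def u1_def \<mu>_def f'_def ..
  moreover have "semiconormed_integral M S m (\<lambda>x. g x powr \<gamma>) = (INF t\<in>{0<..1}. u2 t)"
    unfolding semiconormed_integral_def u2_def \<mu>_def g'_def ..
  moreover have "h = (\<lambda>x. (star (f x) (g x)) powr \<alpha>)" unfolding h_def ..
  ultimately show "(semiconormed_integral M S m (\<lambda>x. (star (f x) (g x)) powr \<alpha>)) powr lam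
       \<le> star ((semiconormed_integral M S m (\<lambda>x. f x powr \<beta>)) powr \<upsilon>)
              ((semiconormed_integral M S m (\<lambda>x. g x powr \<gamma>)) powr \<tau>)" by simp
qed

end
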